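(* Consider the asynchronous dynamic game described in the context, with fixed $A\in\mathbb{R}^{n\times n}$, $B\in\mathbb{R}^{n\times k}$, and let $l=2j+1$ be an odd epoch. The game is in lock mode from epoch $l$ on, i.e. there exists $\gamma$ with $\Phi_i=\gamma$ for all $i\ge l$, if and only if the matrix $C_l$ chosen by the attacker in epoch $l$ satisfies $\dim\mathcal{V}^*(C_l)=\min_{C\in\mathbb{R}^{m\times n}}\dim\operatorname{Ker}\Omega(C,F_{l-1})$.
   Context: For $C\in\mathbb{R}^{m\times n}$, $F\in\mathbb{R}^{k\times n}$ let $\Omega(C,F)=[C;\,C(A+BF);\,\dots;\,C(A+BF)^{n-1}]$ (observability matrix of $\dot x=(A+BF)x$, $y=Cx$). A subspace $\mathcal{V}$ is $(A,B)$-invariant if $(A+BF)\mathcal{V}\subseteq\mathcal{V}$ for some $F$ (a friend of $\mathcal{V}$); $\mathcal{V}^*(C)$ is the maximal $(A,B)$-invariant subspace in $\operatorname{Ker}C$, and $\mathcal{F}(\mathcal{V}^*(C))$ its set of friends. Best responses: $BR1_a(F)=\arg\min_{C}\dim\operatorname{Ker}\Omega(C,F)$; $BR1_d(C)=\arg\max_{F}\dim\operatorname{Ker}\Omega(C,F)$ ($=\mathcal{F}(\mathcal{V}^*(C))$); $BR2_a(F)=\arg\min_{C\in BR1_a(F)}\dim\mathcal{V}^*(C)$; $BR2_d(C)=\arg\max_{F\in BR1_d(C)}\min_{C'\in\mathbb{R}^{m\times n}}\dim\operatorname{Ker}\Omega(C',F)$. The game: an initial $F_0$ is given; in each odd epoch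 $i$ the attacker chooses $C_i\in BR2_a(F_{i-1})$ (keeping $C_i=C_{i-2}$ whenever $C_{i-2}\in BR2_a(F_{i-1})$), $F_i=F_{i-1}$, and the value is $\Phi_i=\min_{C}\dim\operatorname{Ker}\Omega(C,F_{i-1})$; in each even epoch $i$ the defender chooses $F_i\in BR2_d(C_{i-1})$ (keeping $F_i=F_{i-2}$ whenever $F_{i-2}\in BR2_d(C_{i-1})$), $C_i=C_{i-1}$, and the value is $\Phi_i=\max_{F}\dim\operatorname{Ker}\Omega(C_{i-1},F)$. *)

theory Defs
  imports "HOL-Analysis.Analysis"
begin

text \<open>Fixed system matrices A (n x n) and B (n x k); C (m x n) attacker matrices,
  F (k x n) defender feedback matrices. Dimensions are type-indexed.\<close>

definition closed_loop :: "real^('n::finite)^'n \<Rightarrow> real^('k::finite)^'n \<Rightarrow> real^'n^'k \<Rightarrow> real^'n^'n" where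
  "closed_loop A B F = A + B ** F"

text \<open>Kernel of the observability matrix
  Omega(C,F) = [C; C(A+BF); ...; C(A+BF)^(n-1)], i.e. the intersection of the kernels
  of its n block rows.\<close>
definition obs_ker :: "real^('n::finite)^'n \<Rightarrow> real^('k::finite)^'n \<Rightarrow> real^'n^('m::finite) \<Rightarrow> real^'n^'k \<Rightarrow> (real^'n) set" where
  "obs_ker A B C F =
     {x. \<forall>i < CARD('n). C *v (((\<lambda>y. closed_loop A B F *v y) ^^ i) x) = 0}"

definition kdim :: "real^('n::finite)^'n \<Rightarrow> real^('k::finite)^'n \<Rightarrow> real^'n^('m::finite) \<Rightarrow> real^'n^'k \<Rightarrow> nat" where
  "kdim A B C F = dim (obs_ker A B C F)"

definition is_friend :: "real^('n::finite)^'n \<Rightarrow> real^('k::finite)^'n \<Rightarrow> real^'n^'k \<Rightarrow> (real^'n) set \<Rightarrow> bool" where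
  "is_friend A B F V \<longleftrightarrow> (\<forall>x\<in>V. closed_loop A B F *v x \<in> V)"

definition AB_invariant :: "real^('n::finite)^'n \<Rightarrow> real^('k::finite)^'n \<Rightarrow> (real^'n) set \<Rightarrow> bool" where
  "AB_invariant A B V \<longleftrightarrow> subspace V \<and> (\<exists>F. is_friend A B F V)"

definition Vstar :: "real^('n::finite)^'n \<Rightarrow> real^('k::finite)^'n \<Rightarrow> real^'n^('m::finite) \<Rightarrow> (real^'n) set" where
  "Vstar A B C = (THE V. AB_invariant A B V \<and> V \<subseteq> {x. C *v x = 0} \<and>
      (\<forall>W. AB_invariant A B W \<and> W \<subseteq> {x. C *v x = 0} \<longrightarrow> W \<subseteq> V))"

definition min_kdim :: "real^('n::finite)^'n \<Rightarrow> real^('k::finite)^'n \<Rightarrow> real^'n^'k \<Rightarrow> 'm::finite itself \<Rightarrow> nat" where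
  "min_kdim A B F _ = Inf (range (\<lambda>C::real^'n^'m. kdim A B C F))"

definition max_kdim :: "real^('n::finite)^'n \<Rightarrow> real^('k::finite)^'n \<Rightarrow> real^'n^('m::finite) \<Rightarrow> nat" where
  "max_kdim A B C = Sup (range (\<lambda>F::real^'n^'k. kdim A B C F))"

definition BR1_a :: "real^('n::finite)^'n \<Rightarrow> real^('k::finite)^'n \<Rightarrow> real^'n^'k \<Rightarrow> (real^'n^('m::finite)) set" where
  "BR1_a A B F = {C. \<forall>C'::real^'n^'m. kdim A B C F \<le> kdim A B C' F}"

definition BR1_d :: "real^('n::finite)^'n \<Rightarrow> real^('k::finite)^'n \<Rightarrow> real^'n^('m::finite) \<Rightarrow> (real^'n^'k) set" where
  "BR1_d A B C = {F. \<forall>F'. kdim A B C F' \<le> kdim A B C F}"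

definition BR2_a :: "real^('n::finite)^'n \<Rightarrow> real^('k::finite)^'n \<Rightarrow> real^'n^'k \<Rightarrow> (real^'n^('m::finite)) set" where
  "BR2_a A B F = {C::real^'n^'m. C \<in> BR1_a A B F \<and> (\<forall>C'::real^'n^'m. C' \<in> BR1_a A B F \<longrightarrow> dim (Vstar A B C) \<le> dim (Vstar A B C'))}"

definition BR2_d :: "real^('n::finite)^'n \<Rightarrow> real^('k::finite)^'n \<Rightarrow> real^'n^('m::finite) \<Rightarrow> (real^'n^'k) set" where
  "BR2_d A B C = {F \<in> BR1_d A B C. \<forall>F' \<in> BR1_d A B C.
       min_kdim A B F' TYPE('m) \<le> min_kdim A B F TYPE('m)}"

text \<open>A run of the asynchronous game: epochs i = 1,2,...; Fs 0 is the initial F_0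
  (Cs 0 is irrelevant). Odd epochs: attacker moves; even epochs: defender moves.\<close>
definition game_run :: "real^('n::finite)^'n \<Rightarrow> real^('k::finite)^'n \<Rightarrow> (nat \<Rightarrow> real^'n^('m::finite)) \<Rightarrow> (nat \<Rightarrow> real^'n^'k) \<Rightarrow> bool" where
  "game_run A B Cs Fs \<longleftrightarrow>
     (\<forall>i. odd i \<longrightarrow>
        Cs i \<in> BR2_a A B (Fs (i - 1)) \<and>
        (i \<ge> 3 \<and> Cs (i - 2) \<in> BR2_a A B (Fs (i - 1)) \<longrightarrow> Cs i = Cs (i - 2)) \<and>
        Fs i = Fs (i - 1)) \<and>
     (\<forall>i. even i \<and> i \<ge> 2 \<longrightarrow>
        Fs i \<in> BR2_d A B (Cs (i - 1)) \<and>
        (Fs (i - 2) \<in> BR2_d A B (Cs (i - 1)) \<longrightarrow> Fs i = Fs (i - 2)) \<and>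
        Cs i = Cs (i - 1))"

definition game_value :: "real^('n::finite)^'n \<Rightarrow> real^('k::finite)^'n \<Rightarrow> (nat \<Rightarrow> real^'n^('m::finite)) \<Rightarrow> (nat \<Rightarrow> real^'n^'k) \<Rightarrow> nat \<Rightarrow> nat" where
  "game_value A B Cs Fs i =
     (if odd i then min_kdim A B (Fs (i - 1)) TYPE('m) else max_kdim A B (Cs (i - 1)))"

end

theory Submission
  imports Defs
begin

lemma cl_mult: "closed_loop A B F *v x = A *v x + B *v (F *v x)"
  by (simp add: closed_loop_def matrix_vector_mult_add_rdistrib matrix_vector_mul_assoc)

lemma subspace_ker: "subspace {x. (C::real^'n^'m) *v x = 0}"
  by (auto simp: subspace_def matrix_vector_right_distrib matrix_vector_mult_scaleR)

lemma friend_sum: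
  fixes A :: "real^'n^'n" and B :: "real^'k^'n"
  assumes s1: "subspace V1" and s2: "subspace V2"
    and f1: "is_friend A B F1 V1" and f2: "is_friend A B F2 V2"
  shows "\<exists>F. is_friend A B F (span (V1 \<union> V2))"
proof -
  define V where "V = span (V1 \<union> V2)"
  have key: "\<exists>u. A *v b + B *v u \<in> V" if bV: "b \<in> V" for b
  proof -
    obtain v1 v2 where b: "b = v1 + v2" "v1 \<in> V1" "v2 \<in> V2"
    proof -
      have e1: "span V1 = V1" and e2: "span V2 = V2" using s1 s2 by (simp_all add: span_eq_iff)
      show ?thesis using bV that unfolding V_def span_Un e1 e2 by blast
    qed
    have "A *v b + B *v (F1 *v v1 + F2 *v v2) = closed_loop A B F1 *v v1 + closed_loop A B F2 *v v2"
      by (simp add: cl_mult b matrix_vector_right_distrib algebra_simps)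
    also have "\<dots> \<in> V"
    proof -
      have "closed_loop A B F1 *v v1 \<in> V1" "closed_loop A B F2 *v v2 \<in> V2"
        using f1 f2 b by (auto simp: is_friend_def)
      then have "closed_loop A B F1 *v v1 \<in> V" "closed_loop A B F2 *v v2 \<in> V"
        unfolding V_def by (simp_all add: span_base)
      then show ?thesis unfolding V_def by (rule span_add)
    qed
    finally show ?thesis by blast
  qed
  obtain Bs where Bs: "Bs \<subseteq> V" "independent Bs" "V \<subseteq> span Bs"
    by (rule basis_exists)
  define f where "f b = (SOME u. A *v b + B *v u \<in> V)" for b
  obtain g where g: "linear g" "\<forall>x\<in>Bs. g x = f x"
    using linear_independent_extend[OF Bs(2)] by auto
  define F where "F = matrix g"
  have Fg: "F *v x = g x" for x
    unfolding F_def using g(1) by (simp add: matrix_works scalar_mult_eq_scaleR)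
  have lin: "linear (\<lambda>x. closed_loop A B F *v x)"
    by (simp add: matrix_vector_mul_linear)
  have sub: "subspace {x. closed_loop A B F *v x \<in> V}"
    using linear_subspace_vimage[OF lin, of V] by (simp add: vimage_def V_def)
  have "closed_loop A B F *v x \<in> V" if "x \<in> V" for x
  proof (rule span_induct[where P="\<lambda>x. closed_loop A B F *v x \<in> V", OF _ sub])
    show "x \<in> span Bs" using that Bs by blast
    fix b assume b: "b \<in> Bs"
    then have "b \<in> V" using Bs by blast
    from someI_ex[OF key[OF this]] have "A *v b + B *v f b \<in> V" by (simp add: f_def)
    then show "closed_loop A B F *v b \<in> V" using g b by (simp add: cl_mult Fg)
  qed
  then show ?thesis unfolding is_friend_def V_def[symmetric] by blast
qed



lemma zero_AB: "AB_invariant A B {0}"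
  by (auto simp: AB_invariant_def is_friend_def)

lemma Vstar_props:
  fixes A :: "real^'n^'n" and B :: "real^'k^'n" and C :: "real^'n^'m"
  shows "AB_invariant A B (Vstar A B C) \<and> Vstar A B C \<subseteq> {x. C *v x = 0} \<and>
      (\<forall>W. AB_invariant A B W \<and> W \<subseteq> {x. C *v x = 0} \<longrightarrow> W \<subseteq> Vstar A B C)"
proof -
  define K where "K = {x. C *v x = 0}"
  have sK: "subspace K" unfolding K_def by (rule subspace_ker)
  define P where "P W \<longleftrightarrow> AB_invariant A B W \<and> W \<subseteq> K" for W
  have P0: "P {0}" unfolding P_def K_def using zero_AB by auto
  have "\<forall>y. P y \<longrightarrow> dim y < Suc CARD('n)"
    using dim_subset_UNIV_cart by (metis less_Suc_eq_le)
  from Lattices_Big.ex_has_greatest_nat[OF P0 this]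
  obtain W0 where W0: "P W0" "\<And>W. P W \<Longrightarrow> dim W \<le> dim W0" by blast
  have maxl: "W \<subseteq> W0" if PW: "P W" for W
  proof -
    define U where "U = span (W0 \<union> W)"
    from W0(1) PW obtain F1 F2 where "subspace W0" "subspace W" "is_friend A B F1 W0" "is_friend A B F2 W"
      by (auto simp: P_def AB_invariant_def)
    then obtain F where "is_friend A B F U" unfolding U_def using friend_sum by blast
    moreover have "subspace U" unfolding U_def by (rule subspace_span)
    moreover have "U \<subseteq> K" unfolding U_def using W0(1) PW sK
      by (intro span_minimal) (auto simp: P_def)
    ultimately have "P U" by (auto simp: P_def AB_invariant_def)
    then have "dim U \<le> dim W0" by (rule W0(2))
    moreover have "W0 \<subseteq> U" unfolding U_def by (auto intro: span_base)
    ultimately have "span W0 = span U" using dim_eq_span by blast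
    then have "W0 = U" using \<open>subspace W0\<close> \<open>subspace U\<close> by (metis span_eq_iff)
    then show ?thesis unfolding U_def by (auto intro: span_base)
  qed
  have "Vstar A B C = W0"
    unfolding Vstar_def
  proof (rule the_equality)
    show "AB_invariant A B W0 \<and> W0 \<subseteq> {x. C *v x = 0} \<and>
      (\<forall>W. AB_invariant A B W \<and> W \<subseteq> {x. C *v x = 0} \<longrightarrow> W \<subseteq> W0)"
      using W0(1) maxl by (auto simp: P_def K_def)
    fix V assume V: "AB_invariant A B V \<and> V \<subseteq> {x. C *v x = 0} \<and>
      (\<forall>W. AB_invariant A B W \<and> W \<subseteq> {x. C *v x = 0} \<longrightarrow> W \<subseteq> V)"
    then have "V \<subseteq> W0" using maxl by (auto simp: P_def K_def)
    moreover have "W0 \<subseteq> V" using V W0(1) by (auto simp: P_def K_def)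
    ultimately show "V = W0" by blast
  qed
  then show ?thesis using W0(1) maxl by (auto simp: P_def K_def)
qed


definition KK :: "real^'n^'n \<Rightarrow> real^'n^'m \<Rightarrow> nat \<Rightarrow> (real^'n) set" where
  "KK M C j = {x. \<forall>i<j. C *v (((\<lambda>y. M *v y) ^^ i) x) = 0}"

lemma KK_Suc: "KK M C (Suc j) = {x. C *v x = 0 \<and> M *v x \<in> KK M C j}"
  unfolding KK_def by (auto simp: All_less_Suc2 funpow_Suc_right simp del: funpow.simps)

lemma KK_0: "KK M C 0 = UNIV" by (simp add: KK_def)

lemma KK_mono: "KK M C (Suc j) \<subseteq> KK M C j"
  unfolding KK_def by auto

lemma KK_sub: "subspace (KK M C j)"
proof (induction j)
  case 0 then show ?case by (simp add: KK_0 subspace_UNIV)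
next
  case (Suc j)
  have "KK M C (Suc j) = {x. C *v x = 0} \<inter> ((\<lambda>x. M *v x) -` KK M C j)"
    by (auto simp: KK_Suc)
  moreover have "subspace ((\<lambda>x. M *v x) -` KK M C j)"
    by (rule linear_subspace_vimage[OF _ Suc]) (simp add: matrix_vector_mul_linear)
  ultimately show ?case using subspace_ker subspace_inter by metis
qed

lemma KK_stable1: assumes h: "KK M C j = KK M C (Suc j)"
  shows "KK M C (Suc j) = KK M C (Suc (Suc j))"
proof -
  have "KK M C (Suc (Suc j)) = {x. C *v x = 0 \<and> M *v x \<in> KK M C (Suc j)}" by (rule KK_Suc)
  also have "\<dots> = {x. C *v x = 0 \<and> M *v x \<in> KK M C j}" using h by simp
  also have "\<dots> = KK M C (Suc j)" by (rule KK_Suc[symmetric])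
  finally show ?thesis by simp
qed

lemma KK_stable: "KK M C j = KK M C (Suc j) \<Longrightarrow> KK M C (j + d) = KK M C j"
proof (induction d)
  case 0 then show ?case by simp
next
  case (Suc d)
  have "KK M C (j + d) = KK M C (Suc (j + d))"
  proof (induction d)
    case 0 then show ?case using Suc.prems by simp
  next
    case (Suc d) then show ?case using KK_stable1 by simp
  qed
  then show ?case using Suc by simp
qed

lemma KK_dim_less:
  assumes "KK M C j \<noteq> KK M C (Suc j)"
  shows "dim (KK M C (Suc j)) < dim (KK M C j)"
proof (rule ccontr)
  assume "\<not> ?thesis"
  then have "dim (KK M C j) \<le> dim (KK M C (Suc j))" by simp
  then have "span (KK M C (Suc j)) = span (KK M C j)" using dim_eq_span KK_mono by blast
  then show False using assms KK_sub by (metis span_eq_iff)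
qed

lemma KK_fix:
  fixes M :: "real^'n^'n"
  shows "KK M C CARD('n) = KK M C (Suc CARD('n))"
proof (rule ccontr)
  define n where "n = CARD('n)"
  assume ne: "\<not> KK M C CARD('n) = KK M C (Suc CARD('n))"
  have strict: "KK M C j \<noteq> KK M C (Suc j)" if "j \<le> n" for j
  proof
    assume "KK M C j = KK M C (Suc j)"
    from KK_stable[OF this, of "n - j"] KK_stable[OF this, of "Suc n - j"] that
    have "KK M C n = KK M C j" "KK M C (Suc n) = KK M C j" by (simp_all add: Suc_diff_le)
    then show False using ne n_def by simp
  qed
  have "dim (KK M C j) + j \<le> n" if "j \<le> Suc n" for j
    using that
  proof (induction j)
    case 0 then show ?case using dim_subset_UNIV_cart n_def by simp
  next
    case (Suc j)
    from Suc.prems have jn: "j \<le> n" by simp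
    then have "dim (KK M C (Suc j)) < dim (KK M C j)" using strict KK_dim_less by blast
    moreover have "dim (KK M C j) + j \<le> n" using Suc.IH jn by simp
    ultimately show ?case by simp
  qed
  from this[of "Suc n"] show False by simp
qed

lemma obs_ker_KK:
  fixes A :: "real^'n^'n" and B :: "real^'k^'n" and C :: "real^'n^'m"
  shows "obs_ker A B C F = KK (closed_loop A B F) C CARD('n)"
  by (simp add: obs_ker_def KK_def)

lemma obs_ker_inv:
  fixes A :: "real^'n^'n" and B :: "real^'k^'n" and C :: "real^'n^'m"
  shows "AB_invariant A B (obs_ker A B C F) \<and> obs_ker A B C F \<subseteq> {x. C *v x = 0}"
proof -
  have "closed_loop A B F *v x \<in> obs_ker A B C F" if "x \<in> obs_ker A B C F" for x
  proof -
    have "x \<in> KK (closed_loop A B F) C (Suc CARD('n))"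
      using that KK_fix[of "closed_loop A B F" C] unfolding obs_ker_KK by simp
    then show ?thesis unfolding obs_ker_KK by (simp add: KK_Suc)
  qed
  moreover have "obs_ker A B C F \<subseteq> {x. C *v x = 0}"
  proof
    fix x assume "x \<in> obs_ker A B C F"
    then have "\<forall>i<CARD('n). C *v (((\<lambda>y. closed_loop A B F *v y) ^^ i) x) = 0"
      by (simp add: obs_ker_def)
    from this[rule_format, of 0] show "x \<in> {x. C *v x = 0}" by simp
  qed
  ultimately show ?thesis
    by (auto simp: AB_invariant_def is_friend_def obs_ker_KK KK_sub)
qed

lemma kdim_le:
  fixes A :: "real^'n^'n" and B :: "real^'k^'n" and C :: "real^'n^'m"
  shows "kdim A B C F \<le> dim (Vstar A B C)"
  unfolding kdim_def using obs_ker_inv[of A B C F] Vstar_props[of A B C]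
  by (intro dim_subset) blast

lemma kdim_ex:
  fixes A :: "real^'n^'n" and B :: "real^'k^'n" and C :: "real^'n^'m"
  shows "\<exists>F. kdim A B C F = dim (Vstar A B C)"
proof -
  obtain F where F: "is_friend A B F (Vstar A B C)"
    using Vstar_props[of A B C] by (auto simp: AB_invariant_def)
  have "((\<lambda>y. closed_loop A B F *v y) ^^ i) x \<in> Vstar A B C" if "x \<in> Vstar A B C" for x i
    using that F by (induction i) (auto simp: is_friend_def)
  then have "Vstar A B C \<subseteq> obs_ker A B C F"
    using Vstar_props[of A B C] unfolding obs_ker_def by blast
  then have "dim (Vstar A B C) \<le> kdim A B C F" unfolding kdim_def by (rule dim_subset)
  then show ?thesis using kdim_le[of A B C F] by (intro exI[of _ F]) simp
qed

lemma max_kdim_eq: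
  fixes A :: "real^'n^'n" and B :: "real^'k^'n" and C :: "real^'n^'m"
  shows "max_kdim A B C = dim (Vstar A B C)"
proof -
  obtain F where "kdim A B C F = dim (Vstar A B C)" using kdim_ex by blast
  then show ?thesis unfolding max_kdim_def
    by (intro cSup_eq_maximum) (auto simp: kdim_le intro: image_eqI[of _ _ F])
qed

lemma min_kdim_le: "min_kdim A B F TYPE('m) \<le> kdim A B (C::real^'n^'m::finite) F"
  unfolding min_kdim_def by (rule cInf_lower) auto

lemma min_kdim_ex: "\<exists>C::real^'n^'m::finite. kdim A B C F = min_kdim A B F TYPE('m)"
  unfolding min_kdim_def using Inf_nat_def1[of "range (\<lambda>C::real^'n^'m. kdim A B C F)"] by auto



lemma BR1_a_iff:
  fixes A :: "real^'n^'n" and B :: "real^'k^'n" and C :: "real^'n^'m"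
  shows "C \<in> BR1_a A B F \<longleftrightarrow> kdim A B C F = min_kdim A B F TYPE('m)"
proof
  assume "C \<in> BR1_a A B F"
  moreover obtain C' :: "real^'n^'m" where "kdim A B C' F = min_kdim A B F TYPE('m)"
    using min_kdim_ex by blast
  ultimately have "kdim A B C F \<le> min_kdim A B F TYPE('m)"
    unfolding BR1_a_def by (metis (no_types, lifting) mem_Collect_eq)
  then show "kdim A B C F = min_kdim A B F TYPE('m)"
    using min_kdim_le[of A B F C] by (rule le_antisym)
next
  assume "kdim A B C F = min_kdim A B F TYPE('m)"
  then show "C \<in> BR1_a A B F" unfolding BR1_a_def using min_kdim_le by auto
qed

lemma BR1_d_iff:
  fixes A :: "real^'n^'n" and B :: "real^'k^'n" and C :: "real^'n^'m"
  shows "F \<in> BR1_d A B C \<longleftrightarrow> kdim A B C F = dim (Vstar A B C)"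
proof
  assume "F \<in> BR1_d A B C"
  moreover obtain F' where "kdim A B C F' = dim (Vstar A B C)"
    using kdim_ex by blast
  ultimately have "dim (Vstar A B C) \<le> kdim A B C F"
    unfolding BR1_d_def by (metis (no_types, lifting) mem_Collect_eq)
  then show "kdim A B C F = dim (Vstar A B C)"
    using kdim_le[of A B C F] by simp
next
  assume "kdim A B C F = dim (Vstar A B C)"
  then show "F \<in> BR1_d A B C" unfolding BR1_d_def using kdim_le by auto
qed

theorem theorem1:
  fixes A :: "real^'n^'n" and B :: "real^'k^'n"
    and Cs :: "nat \<Rightarrow> real^'n^'m" and Fs :: "nat \<Rightarrow> real^'n^'k"
    and j :: nat and l :: nat
  assumes "game_run A B Cs Fs"
    and "l = 2 * j + 1"
  shows "(\<exists>\<gamma>. \<forall>i\<ge>l. game_value A B Cs Fs i = \<gamma>) \<longleftrightarrow>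
         dim (Vstar A B (Cs l)) = min_kdim A B (Fs (l - 1)) TYPE('m)"
proof -
  note gr = assms(1)[unfolded game_run_def]
  have odd_rule: "Cs i \<in> BR2_a A B (Fs (i - 1)) \<and>
        (i \<ge> 3 \<and> Cs (i - 2) \<in> BR2_a A B (Fs (i - 1)) \<longrightarrow> Cs i = Cs (i - 2)) \<and>
        Fs i = Fs (i - 1)" if "odd i" for i
    by (rule conjunct1[OF gr, rule_format, OF that])
  have even_rule: "Fs i \<in> BR2_d A B (Cs (i - 1)) \<and>
        (Fs (i - 2) \<in> BR2_d A B (Cs (i - 1)) \<longrightarrow> Fs i = Fs (i - 2)) \<and>
        Cs i = Cs (i - 1)" if "even i" "i \<ge> 2" for i
    by (rule conjunct2[OF gr, rule_format, OF conjI[OF that]])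
  define \<sigma> where "\<sigma> C = dim (Vstar A B C)" for C :: "real^'n^'m"
  define \<mu> where "\<mu> F = min_kdim A B F TYPE('m)" for F :: "real^'n^'k"
  have oddl: "odd l" using assms(2) by simp
  have val: "game_value A B Cs Fs i = (if odd i then \<mu> (Fs (i - 1)) else \<sigma> (Cs (i - 1)))" for i
    by (simp add: game_value_def \<mu>_def \<sigma>_def max_kdim_eq)
  have Cl: "Cs l \<in> BR2_a A B (Fs (l - 1))" using odd_rule[OF oddl] by blast
  then have kl: "kdim A B (Cs l) (Fs (l - 1)) = \<mu> (Fs (l - 1))"
    by (simp add: BR2_a_def BR1_a_iff \<mu>_def)
  have vl: "game_value A B Cs Fs l = \<mu> (Fs (l - 1))" using val oddl by simp
  have vl1: "game_value A B Cs Fs (Suc l) = \<sigma> (Cs l)" using val oddl by simp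
  show ?thesis
  proof
    assume "\<exists>\<gamma>. \<forall>i\<ge>l. game_value A B Cs Fs i = \<gamma>"
    then obtain \<gamma> where "\<forall>i\<ge>l. game_value A B Cs Fs i = \<gamma>" by blast
    then have "game_value A B Cs Fs l = game_value A B Cs Fs (Suc l)" by simp
    then show "dim (Vstar A B (Cs l)) = min_kdim A B (Fs (l - 1)) TYPE('m)"
      using vl vl1 by (simp add: \<mu>_def \<sigma>_def)
  next
    assume "dim (Vstar A B (Cs l)) = min_kdim A B (Fs (l - 1)) TYPE('m)"
    then have eq: "\<sigma> (Cs l) = \<mu> (Fs (l - 1))" by (simp add: \<mu>_def \<sigma>_def)
    define G where "G = Fs (Suc l)"
    have GBR: "G \<in> BR2_d A B (Cs l)" using even_rule[of "Suc l"] oddl odd_pos[OF oddl] by (simp add: G_def)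
    then have kG: "kdim A B (Cs l) G = \<sigma> (Cs l)"
      by (simp add: BR2_d_def BR1_d_iff \<sigma>_def)
    have "Fs (l - 1) \<in> BR1_d A B (Cs l)" using kl eq by (simp add: BR1_d_iff \<sigma>_def)
    then have "\<mu> (Fs (l - 1)) \<le> \<mu> G" using GBR by (simp add: BR2_d_def \<mu>_def)
    moreover have "\<mu> G \<le> kdim A B (Cs l) G" unfolding \<mu>_def by (rule min_kdim_le)
    ultimately have muG: "\<mu> G = \<mu> (Fs (l - 1))" using kG eq by simp
    have LG: "Cs l \<in> BR2_a A B G"
      unfolding BR2_a_def
    proof (intro CollectI conjI allI impI)
      show "Cs l \<in> BR1_a A B G" using kG eq muG by (simp add: BR1_a_iff \<mu>_def)
      fix C' :: "real^'n^'m" assume "C' \<in> BR1_a A B G"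
      then have "kdim A B C' G = \<mu> G" by (simp add: BR1_a_iff \<mu>_def)
      then show "dim (Vstar A B (Cs l)) \<le> dim (Vstar A B C')"
        using kdim_le[of A B C' G] eq muG by (simp add: \<sigma>_def)
    qed
    have inv: "Fs (l + 2 * t + 1) = G \<and> Cs (l + 2 * t + 2) = Cs l \<and> Fs (l + 2 * t + 2) = G" for t
    proof (induction t)
      case 0
      have o: "odd (l + 2)" using oddl by simp
      have ar: "l + 2 - 2 = l" "l + 2 - 1 = Suc l" "l + 2 \<ge> 3" using odd_pos[OF oddl] by simp_all
      have "Fs (l + 2) = G" using odd_rule[OF o] ar by (simp add: G_def)
      moreover have "Cs (l + 2) = Cs l" using odd_rule[OF o] LG ar by (simp add: G_def)
      ultimately show ?case by (simp add: G_def)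
    next
      case (Suc t)
      define e where "e = l + 2 * t + 3"
      have ee: "even e" "e \<ge> 2" using oddl by (simp_all add: e_def)
      have "Cs (e - 1) = Cs l" "Fs (e - 2) = G" using Suc.IH by (simp_all add: e_def)
      then have Fe: "Fs e = G" using even_rule[OF ee] GBR by simp
      have o: "odd (e + 1)" using ee by simp
      have "Fs (e + 1) = G" using odd_rule[OF o] Fe by simp
      moreover have "Cs (e + 1) = Cs l"
      proof -
        have ar: "e + 1 - 2 = e - 1" "e + 1 - 1 = e" "e + 1 \<ge> 3" using ee by simp_all
        have "Cs (e + 1 - 2) = Cs l" using \<open>Cs (e - 1) = Cs l\<close> ar by simp
        then show ?thesis using odd_rule[OF o] LG Fe ar by simp
      qed
      moreover have "l + 2 * Suc t + 1 = e" "l + 2 * Suc t + 2 = e + 1" by (simp_all add: e_def)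
      ultimately show ?case using Fe by (simp only:)
    qed
    have "game_value A B Cs Fs i = \<mu> (Fs (l - 1))" if "i \<ge> l" for i
    proof -
      define d where "d = i - l"
      have d: "i = l + d" using that by (simp add: d_def)
      show ?thesis
      proof (cases d)
        case 0 then show ?thesis using vl d by simp
      next
        case (Suc d')
        show ?thesis
        proof (cases "even d'")
          case True
          then obtain t where t: "d' = 2 * t" by (rule evenE)
          have "even i" using d Suc t oddl by simp
          moreover have "Cs (i - 1) = Cs l"
          proof (cases t)
            case 0 then show ?thesis using d Suc t by simp
          next
            case (Suc t')
            then have "i - 1 = l + 2 * t' + 2" using d \<open>d = Suc d'\<close> t by simp
            then show ?thesis using inv[of t'] by (simp only:)
          qed
          ultimately show ?thesis using val eq by simp
        next
          case False
          then have "odd d'" by simp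
          then obtain t where t: "d' = 2 * t + 1" by (rule oddE)
          have "odd i" using d Suc t oddl by simp
          moreover have "i - 1 = l + 2 * t + 1" using d Suc t by simp
          then have "Fs (i - 1) = G" using inv[of t] by (simp only:)
          ultimately show ?thesis using val muG by simp
        qed
      qed
    qed
    then show "\<exists>\<gamma>. \<forall>i\<ge>l. game_value A B Cs Fs i = \<gamma>" by blast
  qed
qed

end
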